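(* Let $(I,\le)$ be a totally ordered set with smallest element $0$, and let $\{G_i,\pi_{ij}\}$ be a direct system of finitely generated groups indexed by $I$ with surjective homomorphisms $\pi_{ij}:G_i\to G_j$ for all $j\ge i$ (with $\pi_{ii}=\mathrm{id}$ and $\pi_{jk}\circ\pi_{ij}=\pi_{ik}$). Let $G_\infty=\varinjlim G_i$, let $G=G_0$, let $\varphi_i=\pi_{0i}:G\to G_i$, let $\varphi:G\to G_\infty$ be the canonical (surjective) map, and for a subgroup $H\le G$ put $H_i=\varphi_i(H)$. Fix a prime $p$. Then for each normal subgroup $K\trianglelefteq G_\infty$ of $p$-power index there exists a normal subgroup $H'\trianglelefteq G$ of $p$-power index such that: (1) $K=\varinjlim H'_i$ (i.e. $K=\varphi(H')$ is the direct limit of the subgroups $H'_i$ under the restricted maps $\pi_{ij}$); (2) $[G_\infty:K]=\lim_{i\in I}[G_i:H'_i]$; (3) $d_p(K)=\lim_{i\in I}d_p(H'_i)$.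
   Context: For a group $A$, $d(A)$ is the minimal number of generators and $d_p(A)=d\big(A/[A,A]A^p\big)$. Limits over $i\in I$ are taken along the total order of $I$. *)

theory Defs
  imports Complex_Main "HOL-Algebra.Algebra"
begin

definition fin_gen :: "('a, 'b) monoid_scheme \<Rightarrow> bool" where
  "fin_gen A \<longleftrightarrow> (\<exists>S. finite S \<and> S \<subseteq> carrier A \<and> generate A S = carrier A)"

definition gen_rank :: "('a, 'b) monoid_scheme \<Rightarrow> nat" where
  "gen_rank A = (LEAST n. \<exists>S. finite S \<and> S \<subseteq> carrier A \<and> card S = n \<and> generate A S = carrier A)"

definition comm_ppow :: "('a, 'b) monoid_scheme \<Rightarrow> nat \<Rightarrow> 'a set" where
  "comm_ppow A p = generate A (derived A (carrier A) \<union> {x [^]\<^bsub>A\<^esub> p | x. x \<in> carrier A})"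

definition d_p :: "('a, 'b) monoid_scheme \<Rightarrow> nat \<Rightarrow> nat" where
  "d_p A p = gen_rank (A Mod (comm_ppow A p))"

definition p_power_index :: "('a, 'b) monoid_scheme \<Rightarrow> 'a set \<Rightarrow> nat \<Rightarrow> bool" where
  "p_power_index A H p \<longleftrightarrow> (\<exists>n. card (rcosets\<^bsub>A\<^esub> H) = p ^ n)"

definition is_direct_limit ::
  "'i::linorder set \<Rightarrow> ('i \<Rightarrow> ('a, 'b) monoid_scheme) \<Rightarrow> ('i \<Rightarrow> 'i \<Rightarrow> 'a \<Rightarrow> 'a)
    \<Rightarrow> ('c, 'd) monoid_scheme \<Rightarrow> ('i \<Rightarrow> 'a \<Rightarrow> 'c) \<Rightarrow> bool" where
  "is_direct_limit I G \<pi> L \<psi> \<longleftrightarrow>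
     (\<forall>i\<in>I. \<psi> i \<in> hom (G i) L) \<and>
     (\<forall>i\<in>I. \<forall>j\<in>I. i \<le> j \<longrightarrow> (\<forall>x\<in>carrier (G i). \<psi> j (\<pi> i j x) = \<psi> i x)) \<and>
     carrier L = (\<Union>i\<in>I. \<psi> i ` carrier (G i)) \<and>
     (\<forall>i\<in>I. \<forall>j\<in>I. \<forall>x\<in>carrier (G i). \<forall>y\<in>carrier (G j).
        \<psi> i x = \<psi> j y \<longrightarrow> (\<exists>k\<in>I. i \<le> k \<and> j \<le> k \<and> \<pi> i k x = \<pi> j k y))"

text \<open>The filter "i \<rightarrow> \<infinity> in I" along the total order of I.\<close>
definition along :: "'i::linorder set \<Rightarrow> 'i filter" where
  "along I = (INF i\<in>I. principal {j\<in>I. i \<le> j})"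

end

theory Submission
  imports Defs
begin

lemma (in group) conj_pow:
  assumes "g \<in> carrier G" "x \<in> carrier G"
  shows "g \<otimes> x [^] (n::nat) \<otimes> inv g = (g \<otimes> x \<otimes> inv g) [^] n"
proof (induction n)
  case 0 then show ?case using assms by simp
next
  case (Suc n)
  have "(g \<otimes> x \<otimes> inv g) [^] Suc n = (g \<otimes> x [^] n \<otimes> inv g) \<otimes> (g \<otimes> x \<otimes> inv g)"
    using Suc by simp
  also have "\<dots> = g \<otimes> (x [^] n \<otimes> x) \<otimes> inv g" using assms by (simp add: m_assoc[symmetric]) (simp add: m_assoc)
  finally show ?case by simp
qed

lemma (in group) comm_ppow_carrier: "comm_ppow G p \<subseteq> carrier G"
  unfolding comm_ppow_def
  by (intro generate_incl) (auto intro: derived_incl[of "carrier G", THEN subsetD] subgroup_self)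

lemma (in group) comm_ppow_normal: "comm_ppow G p \<lhd> G"
proof -
  interpret D: normal "derived G (carrier G)" G by (rule derived_self_is_normal)
  show ?thesis unfolding comm_ppow_def
  proof (rule normal_generateI)
    show "derived G (carrier G) \<union> {x [^] p |x. x \<in> carrier G} \<subseteq> carrier G"
      using D.subset by auto
    fix h g assume h: "h \<in> derived G (carrier G) \<union> {x [^] p |x. x \<in> carrier G}" and g: "g \<in> carrier G"
    show "g \<otimes> h \<otimes> inv g \<in> derived G (carrier G) \<union> {x [^] p |x. x \<in> carrier G}"
    proof (cases "h \<in> derived G (carrier G)")
      case True then show ?thesis using D.inv_op_closed2[OF g True] by auto
    next
      case False
      then obtain x where x: "x \<in> carrier G" "h = x [^] p" using h by auto
      then show ?thesis using conj_pow[OF g x(1), of p] g by auto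
    qed
  qed
qed

lemma comm_ppow_derived: "derived A (carrier A) \<subseteq> comm_ppow A p"
  unfolding comm_ppow_def by (auto intro: generate.incl)

lemma comm_ppow_pow: "x \<in> carrier A \<Longrightarrow> x [^]\<^bsub>A\<^esub> p \<in> comm_ppow A p"
  unfolding comm_ppow_def by (auto intro: generate.incl)

lemma (in group) quot_comm:
  assumes "N \<lhd> G" "derived G (carrier G) \<subseteq> N"
  shows "comm_group (G Mod N)"
proof -
  interpret N: normal N G by fact
  show ?thesis
  proof (rule group.group_comm_groupI[OF N.factorgroup_is_group])
    fix U V assume "U \<in> carrier (G Mod N)" "V \<in> carrier (G Mod N)"
    then obtain g1 g2 where g: "g1 \<in> carrier G" "g2 \<in> carrier G" "U = N #> g1" "V = N #> g2"
      unfolding FactGroup_def RCOSETS_def by auto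
    have c0: "g1 \<otimes> g2 \<otimes> inv g1 \<otimes> inv g2 \<in> derived_set G (carrier G)"
      using g(1,2) by blast
    have c: "g1 \<otimes> g2 \<otimes> inv g1 \<otimes> inv g2 \<in> N"
      using assms(2) generate.incl[OF c0] unfolding derived_def by blast
    have "(g1 \<otimes> g2) \<otimes> inv (g2 \<otimes> g1) = g1 \<otimes> g2 \<otimes> inv g1 \<otimes> inv g2"
      using g by (simp add: inv_mult_group m_assoc)
    hence "N #> ((g1 \<otimes> g2) \<otimes> inv (g2 \<otimes> g1)) = N"
      using coset_join2[OF _ N.subgroup_axioms c] g by simp
    hence "N #> (g1 \<otimes> g2) = N #> (g2 \<otimes> g1)"
      using g by (intro coset_mult_inv1) (simp_all add: N.subset)
    thus "U \<otimes>\<^bsub>G Mod N\<^esub> V = V \<otimes>\<^bsub>G Mod N\<^esub> U"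
      using g N.rcos_sum[of g1 g2] N.rcos_sum[of g2 g1] by simp
  qed
qed

lemma (in group) quot_exp:
  assumes "N \<lhd> G" "\<And>x. x \<in> carrier G \<Longrightarrow> x [^] (p::nat) \<in> N" "Z \<in> carrier (G Mod N)"
  shows "Z [^]\<^bsub>G Mod N\<^esub> p = \<one>\<^bsub>G Mod N\<^esub>"
proof -
  interpret N: normal N G by fact
  obtain x where x: "x \<in> carrier G" "Z = N #> x" using assms(3) unfolding FactGroup_def RCOSETS_def by auto
  have "(N #> x) [^]\<^bsub>G Mod N\<^esub> p = N #> (x [^] p)"
    using hom_nat_pow[OF N.r_coset_hom_Mod x(1) is_group N.factorgroup_is_group] by simp
  also have "\<dots> = N" using assms(2)[OF x(1)] x(1) by (simp add: coset_join2 N.subgroup_axioms)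
  finally show ?thesis using x by simp
qed

lemma comm_ppow_img:
  assumes "group_hom A B h" "h ` carrier A = carrier B"
  shows "h ` comm_ppow A p = comm_ppow B p"
proof -
  interpret group_hom A B h by fact
  have D: "h ` derived A (carrier A) = derived B (carrier B)"
    using derived_img[of "carrier A"] assms(2) by simp
  have P: "h ` {x [^]\<^bsub>A\<^esub> p |x. x \<in> carrier A} = {y [^]\<^bsub>B\<^esub> p |y. y \<in> carrier B}"
  proof
    show "h ` {x [^]\<^bsub>A\<^esub> p |x. x \<in> carrier A} \<subseteq> {y [^]\<^bsub>B\<^esub> p |y. y \<in> carrier B}"
      using hom_nat_pow by auto
    show "{y [^]\<^bsub>B\<^esub> p |y. y \<in> carrier B} \<subseteq> h ` {x [^]\<^bsub>A\<^esub> p |x. x \<in> carrier A}"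
    proof
      fix z assume "z \<in> {y [^]\<^bsub>B\<^esub> p |y. y \<in> carrier B}"
      then obtain y where y: "y \<in> carrier B" "z = y [^]\<^bsub>B\<^esub> p" by auto
      then obtain x where x: "x \<in> carrier A" "y = h x" using assms(2) by auto
      show "z \<in> h ` {x [^]\<^bsub>A\<^esub> p |x. x \<in> carrier A}"
        using x y hom_nat_pow by (intro image_eqI[of _ _ "x [^]\<^bsub>A\<^esub> p"]) auto
    qed
  qed
  have sub: "derived A (carrier A) \<union> {x [^]\<^bsub>A\<^esub> p |x. x \<in> carrier A} \<subseteq> carrier A"
    using G.derived_incl[OF subset_refl G.subgroup_self] by auto
  have "h ` (derived A (carrier A) \<union> {x [^]\<^bsub>A\<^esub> p |x. x \<in> carrier A}) = derived B (carrier B) \<union> {y [^]\<^bsub>B\<^esub> p |y. y \<in> carrier B}"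
    using D P by (simp only: image_Un)
  then show ?thesis unfolding comm_ppow_def
    using generate_img[OF sub] by simp
qed

lemma preimage_quot:
  assumes "group_hom A B h" "h ` carrier A = carrier B" "N \<lhd> B"
  shows "{x \<in> carrier A. h x \<in> N} \<lhd> A"
    and "A Mod {x \<in> carrier A. h x \<in> N} \<cong> B Mod N"
proof -
  interpret group_hom A B h by fact
  interpret N: normal N B by fact
  define f where "f = (\<lambda>x. N #>\<^bsub>B\<^esub> h x)"
  have fhom: "f \<in> hom A (B Mod N)"
  proof (rule homI)
    fix x assume "x \<in> carrier A"
    then show "f x \<in> carrier (B Mod N)" unfolding f_def carrier_FactGroup by auto
  next
    fix x y assume "x \<in> carrier A" "y \<in> carrier A"
    then show "f (x \<otimes>\<^bsub>A\<^esub> y) = f x \<otimes>\<^bsub>B Mod N\<^esub> f y"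
      unfolding f_def by (simp add: N.rcos_sum)
  qed
  interpret F: group_hom A "B Mod N" f
    by (intro group_hom.intro group_hom_axioms.intro) (auto simp: fhom N.factorgroup_is_group)
  have surjf: "f ` carrier A = carrier (B Mod N)"
    unfolding f_def carrier_FactGroup using assms(2) by (auto simp: image_image[symmetric])
  have ker: "kernel A (B Mod N) f = {x \<in> carrier A. h x \<in> N}"
  proof -
    have cj: "N #>\<^bsub>B\<^esub> y = N \<longleftrightarrow> y \<in> N" if "y \<in> carrier B" for y
      using H.coset_join1[OF _ that N.subgroup_axioms] H.coset_join2[OF that N.subgroup_axioms] by blast
    show ?thesis unfolding kernel_def f_def one_FactGroup
      by (rule Collect_cong) (use hom_closed cj in blast)
  qed
  show "{x \<in> carrier A. h x \<in> N} \<lhd> A" using F.normal_kernel ker by simp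
  show "A Mod {x \<in> carrier A. h x \<in> N} \<cong> B Mod N" using F.FactGroup_iso[OF surjf] ker by simp
qed

lemma preimage_index:
  assumes "group_hom A B h" "h ` carrier A = carrier B" "N \<lhd> B"
  shows "card (rcosets\<^bsub>A\<^esub> {x \<in> carrier A. h x \<in> N}) = card (rcosets\<^bsub>B\<^esub> N)"
  using iso_same_card[OF preimage_quot(2)[OF assms]] by (simp add: FactGroup_def)

lemma gen_set_iso:
  assumes "group A" "group B" "\<phi> \<in> iso A B" "finite S" "S \<subseteq> carrier A" "card S = n" "generate A S = carrier A"
  shows "\<exists>T. finite T \<and> T \<subseteq> carrier B \<and> card T = n \<and> generate B T = carrier B"
proof -
  have hom: "\<phi> \<in> hom A B" and bij: "bij_betw \<phi> (carrier A) (carrier B)" using assms(3) by (auto simp: iso_def)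
  interpret group_hom A B \<phi> using hom assms by (intro group_hom.intro group_hom_axioms.intro) auto
  have inj: "inj_on \<phi> S" using bij assms(5) by (auto simp: bij_betw_def intro: inj_on_subset)
  show ?thesis
  proof (intro exI conjI)
    show "finite (\<phi> ` S)" using assms(4) by simp
    show "\<phi> ` S \<subseteq> carrier B" using assms(5) by auto
    show "card (\<phi> ` S) = n" using card_image[OF inj] assms(6) by simp
    show "generate B (\<phi> ` S) = carrier B"
      using generate_img[OF assms(5)] assms(7) bij by (simp add: bij_betw_def)
  qed
qed

lemma gen_rank_iso:
  assumes "group A" "group B" "A \<cong> B"
  shows "gen_rank A = gen_rank B"
proof -
  obtain \<phi> where \<phi>: "\<phi> \<in> iso A B" using assms(3) unfolding is_iso_def by auto
  obtain \<chi> where \<chi>: "\<chi> \<in> iso B A" using group.iso_sym[OF assms(1,3)] unfolding is_iso_def by auto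
  have "(\<exists>S. finite S \<and> S \<subseteq> carrier A \<and> card S = n \<and> generate A S = carrier A) \<longleftrightarrow>
        (\<exists>S. finite S \<and> S \<subseteq> carrier B \<and> card S = n \<and> generate B S = carrier B)" for n
    using gen_set_iso[OF assms(1,2) \<phi>] gen_set_iso[OF assms(2,1) \<chi>] by meson
  then show ?thesis unfolding gen_rank_def by simp
qed

lemma (in group) rcos_sup_eq:
  assumes "subgroup H1 G" "subgroup H2 G" "H1 \<subseteq> H2" "a \<in> carrier G"
  shows "H2 <#> (H1 #> a) = H2 #> a"
proof -
  have HH: "H2 <#> H1 = H2"
  proof
    show "H2 <#> H1 \<subseteq> H2" using assms unfolding set_mult_def by (auto intro: subgroup.m_closed)
    show "H2 \<subseteq> H2 <#> H1"
    proof
      fix x assume "x \<in> H2"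
      then have "x = x \<otimes> \<one>" "\<one> \<in> H1" using r_one[OF subgroup.mem_carrier[OF assms(2)]] subgroup.one_closed[OF assms(1)] by auto
      then show "x \<in> H2 <#> H1" using \<open>x \<in> H2\<close> unfolding set_mult_def by blast
    qed
  qed
  show ?thesis
    using setmult_rcos_assoc[OF subgroup.subset[OF assms(2)] subgroup.subset[OF assms(1)] assms(4)] HH by simp
qed

lemma (in group) rcosets_sup:
  assumes "subgroup H1 G" "subgroup H2 G" "H1 \<subseteq> H2"
  shows "rcosets H2 = (\<lambda>C. H2 <#> C) ` (rcosets H1)"
  using rcos_sup_eq[OF assms] unfolding RCOSETS_def by auto

lemma (in group) index_mono:
  assumes "subgroup H1 G" "subgroup H2 G" "H1 \<subseteq> H2" "finite (rcosets H1)"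
  shows "finite (rcosets H2)" "card (rcosets H2) \<le> card (rcosets H1)"
  using rcosets_sup[OF assms(1-3)] assms(4) by (auto simp: card_image_le)

lemma (in group) index_eq:
  assumes "subgroup H1 G" "subgroup H2 G" "H1 \<subseteq> H2" "finite (rcosets H1)"
    and "card (rcosets H2) = card (rcosets H1)"
  shows "H1 = H2"
proof
  show "H1 \<subseteq> H2" by fact
  have inj: "inj_on (\<lambda>C. H2 <#> C) (rcosets H1)"
    using eq_card_imp_inj_on[OF assms(4)] rcosets_sup[OF assms(1-3)] assms(5) by simp
  show "H2 \<subseteq> H1"
  proof
    fix h assume h: "h \<in> H2"
    have hc: "h \<in> carrier G" using subgroup.mem_carrier[OF assms(2) h] .
    have s1: "H1 \<subseteq> carrier G" using assms subgroup.subset by auto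
    have "H2 <#> (H1 #> h) = H2 <#> (H1 #> \<one>)"
      using rcos_sup_eq[OF assms(1-3) hc] rcos_sup_eq[OF assms(1-3) one_closed]
        coset_join2[OF hc assms(2) h] coset_join2[OF one_closed assms(2) subgroup.one_closed[OF assms(2)]] by simp
    moreover have "H1 #> h \<in> rcosets H1" "H1 #> \<one> \<in> rcosets H1" using rcosetsI[OF s1 hc] rcosetsI[OF s1 one_closed] by auto
    ultimately have "H1 #> h = H1 #> \<one>" using inj by (auto dest: inj_onD)
    then have "H1 #> h = H1" using s1 by simp
    then show "h \<in> H1" using coset_join1[OF _ hc assms(1)] by simp
  qed
qed

lemma (in group) pow_mod_exp:
  assumes "x \<in> carrier G" "x [^] (p::nat) = \<one>"
  shows "x [^] (n::nat) = x [^] (n mod p)"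
proof -
  have "x [^] (p * (n div p)) \<otimes> x [^] (n mod p) = x [^] (p * (n div p) + n mod p)"
    by (rule nat_pow_mult[OF assms(1)])
  also have "\<dots> = x [^] n" by simp
  finally have e: "x [^] n = x [^] (p * (n div p)) \<otimes> x [^] (n mod p)" by simp
  have "x [^] (p * (n div p)) = (x [^] p) [^] (n div p)" using nat_pow_pow[OF assms(1)] by simp
  then show ?thesis using e assms by simp
qed

lemma (in comm_group) fin_gen_exp_finite:
  assumes "finite T" "T \<subseteq> carrier G" "p > 0" "\<And>x. x \<in> carrier G \<Longrightarrow> x [^] (p::nat) = \<one>"
  shows "finite (generate G T)"
  using assms(1,2)
proof (induction T rule: finite_induct)
  case empty then show ?case by (simp add: generate_empty)
next
  case (insert t T)
  have t: "t \<in> carrier G" and T: "T \<subseteq> carrier G" using insert.prems by auto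
  define W where "W = (\<lambda>(a, n::nat). a \<otimes> t [^] n) ` (generate G T \<times> {..<p})"
  have gc: "generate G T \<subseteq> carrier G" using generate_incl[OF T] .
  have Wc: "W \<subseteq> carrier G" unfolding W_def using gc t by auto
  have pm: "t [^] n = t [^] (n mod p)" for n :: nat using pow_mod_exp[OF t assms(4)[OF t]] .
  have Wmem: "a \<otimes> t [^] n \<in> W" if "a \<in> generate G T" for a and n :: nat
  proof -
    have "a \<otimes> t [^] n = a \<otimes> t [^] (n mod p)" using pm by simp
    then show ?thesis unfolding W_def using that assms(3) by (auto intro!: image_eqI[of _ _ "(a, n mod p)"])
  qed
  have sg: "subgroup W G"
  proof (rule subgroupI)
    show "W \<subseteq> carrier G" by (rule Wc)
    show "W \<noteq> {}" unfolding W_def using assms(3) generate.one[of G T] by auto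
  next
    fix w assume "w \<in> W"
    then obtain a n where an: "a \<in> generate G T" "w = a \<otimes> t [^] (n::nat)" unfolding W_def by auto
    have ac: "a \<in> carrier G" using an gc by auto
    have "t [^] n \<otimes> t [^] (n * (p - 1)) = t [^] (n * p)"
    proof -
      have "n + n * (p - 1) = n * p" using assms(3) by (cases p) auto
      then show ?thesis using nat_pow_mult[OF t, of n "n * (p - 1)"] by simp
    qed
    also have "\<dots> = (t [^] p) [^] n" using nat_pow_pow[OF t, of p n] by (simp add: mult.commute)
    also have "\<dots> = \<one>" using assms(4)[OF t] by simp
    finally have "inv (t [^] n) = t [^] (n * (p - 1))"
      using t by (intro inv_equality) (simp_all add: m_comm)
    then have "inv w = inv a \<otimes> t [^] (n * (p - 1))"
      using an ac t by (simp add: inv_mult m_comm)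
    then show "inv w \<in> W" using Wmem generate_m_inv_closed[OF T an(1)] by simp
  next
    fix v w assume "v \<in> W" "w \<in> W"
    then obtain a n b m where "a \<in> generate G T" "v = a \<otimes> t [^] (n::nat)" "b \<in> generate G T" "w = b \<otimes> t [^] (m::nat)"
      unfolding W_def by auto
    moreover have "a \<in> carrier G" "b \<in> carrier G" using calculation gc by auto
    ultimately have "v \<otimes> w = (a \<otimes> b) \<otimes> t [^] (n + m)" "a \<otimes> b \<in> generate G T"
      using t by (simp_all add: m_ac nat_pow_mult[symmetric] generate.eng)
    then show "v \<otimes> w \<in> W" using Wmem by simp
  qed
  have "insert t T \<subseteq> W"
  proof
    fix s assume "s \<in> insert t T"
    then show "s \<in> W"
    proof
      assume "s = t"
      then have "s = \<one> \<otimes> t [^] (1::nat)" using t by simp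
      then show ?thesis using Wmem generate.one by metis
    next
      assume "s \<in> T"
      then have "s = s \<otimes> t [^] (0::nat)" "s \<in> generate G T" using T by (auto intro: generate.incl)
      then show ?thesis using Wmem by metis
    qed
  qed
  then have "generate G (insert t T) \<subseteq> W" using generate_subgroup_incl[OF _ sg] by blast
  moreover have "finite W" unfolding W_def using insert.IH[OF T] by simp
  ultimately show ?case by (rule finite_subset)
qed

lemma fin_gen_quot_finite:
  assumes "group A" "fin_gen A" "p > 0"
  shows "finite (rcosets\<^bsub>A\<^esub> (comm_ppow A p))"
proof -
  interpret group A by fact
  let ?N = "comm_ppow A p"
  interpret N: normal ?N A by (rule comm_ppow_normal)
  have cg: "comm_group (A Mod ?N)" by (rule quot_comm[OF comm_ppow_normal comm_ppow_derived])
  interpret Q: comm_group "A Mod ?N" by (rule cg)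
  have ex: "\<And>z. z \<in> carrier (A Mod ?N) \<Longrightarrow> z [^]\<^bsub>A Mod ?N\<^esub> p = \<one>\<^bsub>A Mod ?N\<^esub>"
    by (rule quot_exp[OF comm_ppow_normal comm_ppow_pow])
  obtain S where S: "finite S" "S \<subseteq> carrier A" "generate A S = carrier A" using assms(2) unfolding fin_gen_def by auto
  interpret h: group_hom A "A Mod ?N" "\<lambda>x. ?N #>\<^bsub>A\<^esub> x"
    by (intro group_hom.intro group_hom_axioms.intro) (auto simp: N.r_coset_hom_Mod N.factorgroup_is_group)
  have "generate (A Mod ?N) ((\<lambda>x. ?N #>\<^bsub>A\<^esub> x) ` S) = carrier (A Mod ?N)"
    using h.generate_img[OF S(2)] S(3) by (simp add: carrier_FactGroup)
  moreover have "finite (generate (A Mod ?N) ((\<lambda>x. ?N #>\<^bsub>A\<^esub> x) ` S))"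
  proof (rule Q.fin_gen_exp_finite[OF _ _ assms(3) ex])
    show "finite ((\<lambda>x. ?N #>\<^bsub>A\<^esub> x) ` S)" using S by simp
    show "(\<lambda>x. ?N #>\<^bsub>A\<^esub> x) ` S \<subseteq> carrier (A Mod ?N)" using S(2) by (auto simp: carrier_FactGroup)
  qed
  ultimately show ?thesis by (simp add: FactGroup_def)
qed

lemma (in group) schreier_fin_gen:
  assumes "fin_gen G" "subgroup N G" "finite (rcosets N)"
  shows "fin_gen (G\<lparr>carrier := N\<rparr>)"
proof -
  obtain S where S: "finite S" "S \<subseteq> carrier G" "generate G S = carrier G"
    using assms(1) unfolding fin_gen_def by auto
  have Nsub: "N \<subseteq> carrier G" using assms(2) subgroup.subset by auto
  define f where "f C = (if C = N then \<one> else (SOME x. x \<in> C))" for C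
  define r where "r x = f (N #> x)" for x
  have fC: "f C \<in> C" if Cin: "C \<in> rcosets N" for C
  proof -
    from Cin obtain a where a: "a \<in> carrier G" "C = N #> a" unfolding RCOSETS_def by blast
    have "a \<in> C" using rcos_self[OF a(1) assms(2)] a by simp
    then show ?thesis unfolding f_def using subgroup.one_closed[OF assms(2)] by (auto intro: someI)
  qed
  have rc: "C \<subseteq> carrier G" if "C \<in> rcosets N" for C
    using subgroup.rcosets_carrier[OF assms(2) is_group that] .
  have rcos: "N #> x \<in> rcosets N" if "x \<in> carrier G" for x using rcosetsI[OF Nsub that] .
  have r1: "r x \<in> N #> x" "r x \<in> carrier G" if "x \<in> carrier G" for x
    using fC[OF rcos[OF that]] rc[OF rcos[OF that]] unfolding r_def by auto
  have r2: "N #> r x = N #> x" if "x \<in> carrier G" for x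
    using repr_independence[OF r1(1)[OF that] that assms(2)] by simp
  have r3: "x \<otimes> inv (r x) \<in> N" if "x \<in> carrier G" for x
  proof -
    have "r x \<otimes> inv x \<in> N" using subgroup.rcos_module_imp[OF assms(2) is_group that r1(1)[OF that]] .
    then have "inv (r x \<otimes> inv x) \<in> N" using subgroup.m_inv_closed[OF assms(2)] by blast
    then show ?thesis using that r1(2)[OF that] by (simp add: inv_mult_group)
  qed
  have r4: "r (r x \<otimes> g) = r (x \<otimes> g)" if "x \<in> carrier G" "g \<in> carrier G" for x g
  proof -
    have "N #> (r x \<otimes> g) = (N #> r x) #> g" using coset_mult_assoc[OF Nsub r1(2)[OF that(1)] that(2)] by simp
    also have "\<dots> = N #> (x \<otimes> g)" using r2[OF that(1)] coset_mult_assoc[OF Nsub that] by simp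
    finally show ?thesis unfolding r_def by simp
  qed
  define T where "T = f ` (rcosets N)"
  have Tfin: "finite T" unfolding T_def using assms(3) by simp
  have Tc: "T \<subseteq> carrier G" unfolding T_def using fC rc by blast
  have rT: "r t = t" if tT: "t \<in> T" for t
  proof -
    obtain C where C: "C \<in> rcosets N" "t = f C" using tT unfolding T_def by auto
    obtain a where a: "a \<in> carrier G" "C = N #> a" using C(1) by (auto simp: RCOSETS_def)
    have "t \<in> N #> a" using fC[OF C(1)] C a by simp
    then have "N #> a = N #> t" using repr_independence[OF _ a(1) assms(2)] by simp
    then show ?thesis unfolding r_def using C a by simp
  qed
  have rT': "r x \<in> T" if "x \<in> carrier G" for x unfolding r_def T_def using rcos[OF that] by simp
  have NN: "N #> \<one> = N" using Nsub by simp
  have oneT: "\<one> \<in> T"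
  proof -
    have "f N = \<one>" unfolding f_def by simp
    then show ?thesis unfolding T_def using rcos[OF one_closed] NN by (metis image_eqI)
  qed
  have rN: "r h = \<one>" if "h \<in> N" for h
    using coset_join2[OF subgroup.mem_carrier[OF assms(2) that] assms(2) that] unfolding r_def f_def by simp
  define Y where "Y = (\<lambda>(t, s). t \<otimes> s \<otimes> inv (r (t \<otimes> s))) ` (T \<times> S)"
  have Yfin: "finite Y" unfolding Y_def using Tfin S(1) by simp
  have YN: "Y \<subseteq> N" unfolding Y_def using r3 Tc S(2) by (auto intro!: r3 simp: subset_iff)
  define U where "U = generate G Y"
  have Usg: "subgroup U G" unfolding U_def using generate_is_subgroup YN Nsub by blast
  have UN: "U \<subseteq> N" unfolding U_def using generate_subgroup_incl[OF YN assms(2)] .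
  have YU: "Y \<subseteq> U" unfolding U_def using generate.incl[of _ Y G] by blast
  have main: "\<forall>t\<in>T. t \<otimes> g \<otimes> inv (r (t \<otimes> g)) \<in> U" if "g \<in> generate G S" for g
    using that
  proof (induction rule: generate.induct)
    case one
    show ?case
    proof
      fix t assume t: "t \<in> T"
      have tc: "t \<in> carrier G" using t Tc by auto
      have "t \<otimes> \<one> \<otimes> inv (r (t \<otimes> \<one>)) = \<one>" using rT[OF t] tc by simp
      then show "t \<otimes> \<one> \<otimes> inv (r (t \<otimes> \<one>)) \<in> U" using subgroup.one_closed[OF Usg] by simp
    qed
  next
    case (incl s)
    show ?case
    proof
      fix t assume t: "t \<in> T"
      have "t \<otimes> s \<otimes> inv (r (t \<otimes> s)) \<in> Y" unfolding Y_def using t incl by (auto intro!: image_eqI[of _ _ "(t, s)"])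
      then show "t \<otimes> s \<otimes> inv (r (t \<otimes> s)) \<in> U" using YU by auto
    qed
  next
    case (inv s)
    show ?case
    proof
      fix t assume t: "t \<in> T"
      have tc: "t \<in> carrier G" using t Tc by auto
      have sc: "s \<in> carrier G" using inv S(2) by auto
      define t' where "t' = r (t \<otimes> inv s)"
      have t'T: "t' \<in> T" unfolding t'_def using rT' tc sc by simp
      have t'c: "t' \<in> carrier G" using t'T Tc by auto
      have "r (t' \<otimes> s) = r ((t \<otimes> inv s) \<otimes> s)" unfolding t'_def using r4 tc sc by simp
      also have "\<dots> = t" using rT[OF t] tc sc by (simp add: m_assoc)
      finally have e: "r (t' \<otimes> s) = t" .
      have "t' \<otimes> s \<otimes> inv t \<in> Y" unfolding Y_def using t'T inv e by (auto intro!: image_eqI[of _ _ "(t', s)"])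
      then have "inv (t' \<otimes> s \<otimes> inv t) \<in> U" using YU subgroup.m_inv_closed[OF Usg] by auto
      moreover have "inv (t' \<otimes> s \<otimes> inv t) = t \<otimes> inv s \<otimes> inv t'" using tc sc t'c by (simp add: inv_mult_group m_assoc)
      ultimately show "t \<otimes> inv s \<otimes> inv (r (t \<otimes> inv s)) \<in> U" unfolding t'_def by simp
    qed
  next
    case (eng g1 g2)
    have gg: "g1 \<in> generate G S" "g2 \<in> generate G S" using eng by blast+
    have IH1: "\<forall>t\<in>T. t \<otimes> g1 \<otimes> inv (r (t \<otimes> g1)) \<in> U" using eng by blast
    have IH2: "\<forall>t\<in>T. t \<otimes> g2 \<otimes> inv (r (t \<otimes> g2)) \<in> U" using eng by blast
    have g1c: "g1 \<in> carrier G" using gg(1) generate_in_carrier[OF S(2)] by auto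
    have g2c: "g2 \<in> carrier G" using gg(2) generate_in_carrier[OF S(2)] by auto
    show ?case
    proof
      fix t assume t: "t \<in> T"
      have tc: "t \<in> carrier G" using t Tc by auto
      define t1 where "t1 = r (t \<otimes> g1)"
      have t1T: "t1 \<in> T" unfolding t1_def using rT' tc g1c by simp
      have t1c: "t1 \<in> carrier G" using t1T Tc by auto
      have u1: "t \<otimes> g1 \<otimes> inv t1 \<in> U" using IH1 t unfolding t1_def by auto
      have u2: "t1 \<otimes> g2 \<otimes> inv (r (t1 \<otimes> g2)) \<in> U" using IH2 t1T by auto
      have e: "r (t1 \<otimes> g2) = r (t \<otimes> (g1 \<otimes> g2))" unfolding t1_def using r4[of "t \<otimes> g1" g2] tc g1c g2c by (simp add: m_assoc)
      have rc': "r (t \<otimes> (g1 \<otimes> g2)) \<in> carrier G" using r1(2) tc g1c g2c by simp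
      have "(t \<otimes> g1 \<otimes> inv t1) \<otimes> (t1 \<otimes> g2 \<otimes> inv (r (t1 \<otimes> g2))) = t \<otimes> (g1 \<otimes> g2) \<otimes> inv (r (t \<otimes> (g1 \<otimes> g2)))"
      proof -
        have canc: "inv t1 \<otimes> (t1 \<otimes> z) = z" if "z \<in> carrier G" for z
          using that t1c by (simp add: m_assoc[symmetric])
        show ?thesis unfolding e using tc g1c g2c t1c rc' by (simp add: m_assoc canc)
      qed
      then show "t \<otimes> (g1 \<otimes> g2) \<otimes> inv (r (t \<otimes> (g1 \<otimes> g2))) \<in> U"
        using subgroup.m_closed[OF Usg u1 u2] by simp
    qed
  qed
  have "N \<subseteq> U"
  proof
    fix h assume h: "h \<in> N"
    have hc: "h \<in> carrier G" using h Nsub by auto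
    have "\<one> \<otimes> h \<otimes> inv (r (\<one> \<otimes> h)) \<in> U" using main[of h] S(3) hc oneT by auto
    then show "h \<in> U" using rN[OF h] hc by simp
  qed
  then have UeqN: "U = N" using UN by auto
  show ?thesis unfolding fin_gen_def
  proof (intro exI conjI)
    show "finite Y" by fact
    show "Y \<subseteq> carrier (G\<lparr>carrier := N\<rparr>)" using YN by simp
    show "generate (G\<lparr>carrier := N\<rparr>) Y = carrier (G\<lparr>carrier := N\<rparr>)"
      using generate_consistent[OF YN assms(2)] UeqN unfolding U_def by simp
  qed
qed

lemma along_eventually:
  assumes "i0 \<in> I" "\<forall>j\<in>I. i0 \<le> j \<longrightarrow> P j"
  shows "eventually P (along I)"
  unfolding along_def
  by (rule eventually_INF1[OF assms(1)]) (use assms(2) in \<open>auto simp: eventually_principal\<close>)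

lemma group_homI': "group A \<Longrightarrow> group B \<Longrightarrow> h \<in> hom A B \<Longrightarrow> group_hom A B h"
  by (intro group_hom.intro group_hom_axioms.intro)

lemma dp_eventually:
  fixes I :: "'i::linorder set" and A :: "'i \<Rightarrow> ('a, 'b) monoid_scheme"
    and \<pi> :: "'i \<Rightarrow> 'i \<Rightarrow> 'a \<Rightarrow> 'a" and B :: "('c, 'd) monoid_scheme" and \<psi> :: "'i \<Rightarrow> 'a \<Rightarrow> 'c"
  assumes i0: "i0 \<in> I" "\<forall>i\<in>I. i0 \<le> i"
    and grp: "\<forall>i\<in>I. group (A i)" and fg: "fin_gen (A i0)"
    and hom: "\<forall>i\<in>I. \<forall>j\<in>I. i \<le> j \<longrightarrow> \<pi> i j \<in> hom (A i) (A j)"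
    and surj: "\<forall>i\<in>I. \<forall>j\<in>I. i \<le> j \<longrightarrow> \<pi> i j ` carrier (A i) = carrier (A j)"
    and comp: "\<forall>i\<in>I. \<forall>j\<in>I. \<forall>k\<in>I. i \<le> j \<longrightarrow> j \<le> k \<longrightarrow>
                 (\<forall>x\<in>carrier (A i). \<pi> j k (\<pi> i j x) = \<pi> i k x)"
    and B: "group B" and lim: "is_direct_limit I A \<pi> B \<psi>" and p: "p > 0"
  shows "\<exists>i1\<in>I. \<forall>j\<in>I. i1 \<le> j \<longrightarrow> d_p (A j) p = d_p B p"
proof -
  define \<Phi> where "\<Phi> i = comm_ppow (A i) p" for i
  define \<Phi>B where "\<Phi>B = comm_ppow B p"
  note L = lim[unfolded is_direct_limit_def]
  have psihom: "\<forall>i\<in>I. \<psi> i \<in> hom (A i) B" using L by (rule conjunct1)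
  have compat: "\<forall>i\<in>I. \<forall>j\<in>I. i \<le> j \<longrightarrow> (\<forall>x\<in>carrier (A i). \<psi> j (\<pi> i j x) = \<psi> i x)"
    using L by (elim conjE)
  have carB: "carrier B = (\<Union>i\<in>I. \<psi> i ` carrier (A i))" using L by (elim conjE)
  have inj: "\<forall>i\<in>I. \<forall>j\<in>I. \<forall>x\<in>carrier (A i). \<forall>y\<in>carrier (A j).
        \<psi> i x = \<psi> j y \<longrightarrow> (\<exists>k\<in>I. i \<le> k \<and> j \<le> k \<and> \<pi> i k x = \<pi> j k y)"
    using L by (elim conjE)
  have gh: "group_hom (A i) (A j) (\<pi> i j)" if "i \<in> I" "j \<in> I" "i \<le> j" for i j
    using grp hom that by (intro group_homI') auto
  have ghpsi: "group_hom (A i) B (\<psi> i)" if "i \<in> I" for i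
    using grp psihom B that by (intro group_homI') auto
  have psi_img: "\<psi> j ` carrier (A j) = \<psi> i0 ` carrier (A i0)" if "j \<in> I" for j
  proof -
    have c: "\<psi> j (\<pi> i0 j x) = \<psi> i0 x" if "x \<in> carrier (A i0)" for x
      using compat i0 \<open>j \<in> I\<close> that by blast
    have "\<psi> j ` (\<pi> i0 j ` carrier (A i0)) = \<psi> i0 ` carrier (A i0)"
      unfolding image_image using c by (rule image_cong[OF refl])
    moreover have "\<pi> i0 j ` carrier (A i0) = carrier (A j)" using surj i0 that by blast
    ultimately show ?thesis by simp
  qed
  have psi_surj: "\<psi> j ` carrier (A j) = carrier B" if "j \<in> I" for j
  proof -
    have "(\<Union>i\<in>I. \<psi> i ` carrier (A i)) = (\<Union>i\<in>I. \<psi> i0 ` carrier (A i0))"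
      using psi_img by (rule SUP_cong[OF refl])
    also have "\<dots> = \<psi> i0 ` carrier (A i0)" using i0(1) by auto
    finally show ?thesis using carB psi_img[OF that] by simp
  qed
  have Phi_img: "\<pi> i j ` \<Phi> i = \<Phi> j" if "i \<in> I" "j \<in> I" "i \<le> j" for i j
    unfolding \<Phi>_def using comm_ppow_img[OF gh[OF that]] surj that by simp
  have PhiB_img: "\<psi> j ` \<Phi> j = \<Phi>B" if "j \<in> I" for j
    unfolding \<Phi>_def \<Phi>B_def using comm_ppow_img[OF ghpsi[OF that] psi_surj[OF that]] .
  have Phi_normal: "\<Phi> i \<lhd> A i" if "i \<in> I" for i
    unfolding \<Phi>_def using grp that by (simp add: group.comm_ppow_normal)
  have PhiB_normal: "\<Phi>B \<lhd> B" unfolding \<Phi>B_def using B by (simp add: group.comm_ppow_normal)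
  have Phi_carr: "\<Phi> i \<subseteq> carrier (A i)" if "i \<in> I" for i
    unfolding \<Phi>_def using grp that by (simp add: group.comm_ppow_carrier)
  interpret A0: group "A i0" using grp i0 by auto
  define M where "M k = {x \<in> carrier (A i0). \<pi> i0 k x \<in> \<Phi> k}" for k
  have M_normal: "M k \<lhd> A i0" if "k \<in> I" for k
    unfolding M_def using preimage_quot(1)[OF gh[OF i0(1) that] _ Phi_normal[OF that]] surj i0 that by auto
  have M_sg: "subgroup (M k) (A i0)" if "k \<in> I" for k using M_normal[OF that] normal_def by blast
  have Phi0_sg: "subgroup (\<Phi> i0) (A i0)" using Phi_normal[OF i0(1)] normal_def by blast
  have Phi0_M: "\<Phi> i0 \<subseteq> M k" if "k \<in> I" for k
    unfolding M_def using Phi_img[OF i0(1) that] i0 that Phi_carr[OF i0(1)] by auto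
  have fin0: "finite (rcosets\<^bsub>A i0\<^esub> (\<Phi> i0))"
    unfolding \<Phi>_def using fin_gen_quot_finite[OF A0.is_group fg p] .
  have finM: "finite (rcosets\<^bsub>A i0\<^esub> (M k))" if "k \<in> I" for k
    using A0.index_mono(1)[OF Phi0_sg M_sg[OF that] Phi0_M[OF that] fin0] .
  obtain i1 where i1: "i1 \<in> I" "\<forall>k. k \<in> I \<longrightarrow> card (rcosets\<^bsub>A i0\<^esub> (M i1)) \<le> card (rcosets\<^bsub>A i0\<^esub> (M k))"
    using ex_has_least_nat[of "\<lambda>k. k \<in> I" i0 "\<lambda>k. card (rcosets\<^bsub>A i0\<^esub> (M k))"] i0(1) by blast
  have Mstab: "M k = M i1" if "k \<in> I" "i1 \<le> k" for k
  proof -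
    have sub: "M i1 \<subseteq> M k"
    proof
      fix x assume x: "x \<in> M i1"
      then have xc: "x \<in> carrier (A i0)" and xp: "\<pi> i0 i1 x \<in> \<Phi> i1" unfolding M_def by auto
      have "\<pi> i0 k x = \<pi> i1 k (\<pi> i0 i1 x)" using comp i0 i1(1) that xc by metis
      also have "\<dots> \<in> \<Phi> k" using Phi_img[OF i1(1) that] xp by auto
      finally show "x \<in> M k" unfolding M_def using xc by simp
    qed
    have "card (rcosets\<^bsub>A i0\<^esub> (M k)) \<le> card (rcosets\<^bsub>A i0\<^esub> (M i1))"
      using A0.index_mono(2)[OF M_sg[OF i1(1)] M_sg[OF that(1)] sub finM[OF i1(1)]] .
    then have "card (rcosets\<^bsub>A i0\<^esub> (M k)) = card (rcosets\<^bsub>A i0\<^esub> (M i1))" using i1(2) that(1) by (simp add: le_antisym)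
    then show ?thesis using A0.index_eq[OF M_sg[OF i1(1)] M_sg[OF that(1)] sub finM[OF i1(1)]] by simp
  qed
  have "\<forall>j\<in>I. i1 \<le> j \<longrightarrow> d_p (A j) p = d_p B p"
  proof (intro ballI impI)
    fix j assume j: "j \<in> I" "i1 \<le> j"
    have ker: "{x \<in> carrier (A j). \<psi> j x \<in> \<Phi>B} = \<Phi> j"
    proof
      show "\<Phi> j \<subseteq> {x \<in> carrier (A j). \<psi> j x \<in> \<Phi>B}" using PhiB_img[OF j(1)] Phi_carr[OF j(1)] by auto
      show "{x \<in> carrier (A j). \<psi> j x \<in> \<Phi>B} \<subseteq> \<Phi> j"
      proof
        fix x assume "x \<in> {x \<in> carrier (A j). \<psi> j x \<in> \<Phi>B}"
        then have xc: "x \<in> carrier (A j)" and xB: "\<psi> j x \<in> \<Phi>B" by auto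
        obtain w where w: "w \<in> \<Phi> j" "\<psi> j x = \<psi> j w" using xB PhiB_img[OF j(1)] by auto
        have wc: "w \<in> carrier (A j)" using w(1) Phi_carr[OF j(1)] by auto
        have "\<exists>k\<in>I. j \<le> k \<and> j \<le> k \<and> \<pi> j k x = \<pi> j k w"
          using inj j(1) xc wc w(2) by blast
        then obtain k where k: "k \<in> I" "j \<le> k" "\<pi> j k x = \<pi> j k w" by blast
        have "\<pi> j k w \<in> \<Phi> k" using Phi_img[OF j(1) k(1,2)] w(1) by auto
        have "x \<in> \<pi> i0 j ` carrier (A i0)" using surj i0 j xc by blast
        then obtain y where y: "y \<in> carrier (A i0)" "x = \<pi> i0 j y" by blast
        have "\<pi> i0 k y = \<pi> j k x"
          using comp[rule_format, OF i0(1) j(1) k(1) _ k(2) y(1)] i0(2) j(1) y(2) by simp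
        then have "y \<in> M k" unfolding M_def using y(1) k(3) \<open>\<pi> j k w \<in> \<Phi> k\<close> by simp
        then have "y \<in> M j" using Mstab[OF k(1)] Mstab[OF j] k(2) j(2) by simp
        then show "x \<in> \<Phi> j" unfolding M_def using y by simp
      qed
    qed
    have iso: "A j Mod \<Phi> j \<cong> B Mod \<Phi>B"
      using preimage_quot(2)[OF ghpsi[OF j(1)] psi_surj[OF j(1)] PhiB_normal] ker by simp
    have "gen_rank (A j Mod \<Phi> j) = gen_rank (B Mod \<Phi>B)"
      using gen_rank_iso[OF normal.factorgroup_is_group[OF Phi_normal[OF j(1)]]
          normal.factorgroup_is_group[OF PhiB_normal] iso] .
    then show "d_p (A j) p = d_p B p" unfolding d_p_def \<Phi>_def \<Phi>B_def .
  qed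
  then show ?thesis using i1(1) by blast
qed

theorem lemma3p4:
  fixes I :: "'i::linorder set" and i0 :: 'i
    and G :: "'i \<Rightarrow> 'a monoid" and \<pi> :: "'i \<Rightarrow> 'i \<Rightarrow> 'a \<Rightarrow> 'a"
    and Ginf :: "'c monoid" and \<psi> :: "'i \<Rightarrow> 'a \<Rightarrow> 'c"
    and p :: nat and K :: "'c set"
  assumes i0: "i0 \<in> I" "\<forall>i\<in>I. i0 \<le> i"
    and grp: "\<forall>i\<in>I. group (G i) \<and> fin_gen (G i)"
    and hom: "\<forall>i\<in>I. \<forall>j\<in>I. i \<le> j \<longrightarrow> \<pi> i j \<in> hom (G i) (G j)"
    and surj: "\<forall>i\<in>I. \<forall>j\<in>I. i \<le> j \<longrightarrow> \<pi> i j ` carrier (G i) = carrier (G j)"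
    and id: "\<forall>i\<in>I. \<forall>x\<in>carrier (G i). \<pi> i i x = x"
    and comp: "\<forall>i\<in>I. \<forall>j\<in>I. \<forall>k\<in>I. i \<le> j \<longrightarrow> j \<le> k \<longrightarrow>
                 (\<forall>x\<in>carrier (G i). \<pi> j k (\<pi> i j x) = \<pi> i k x)"
    and ginf: "group Ginf" "is_direct_limit I G \<pi> Ginf \<psi>"
    and p: "Factorial_Ring.prime p"
    and K: "K \<lhd> Ginf" "p_power_index Ginf K p"
  shows "\<exists>H'. H' \<lhd> G i0 \<and> p_power_index (G i0) H' p \<and>
           K = \<psi> i0 ` H' \<and>
           is_direct_limit I (\<lambda>i. (G i)\<lparr>carrier := \<pi> i0 i ` H'\<rparr>) \<pi> (Ginf\<lparr>carrier := K\<rparr>) \<psi> \<and>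
           ((\<lambda>i. card (rcosets\<^bsub>G i\<^esub> (\<pi> i0 i ` H'))) \<longlongrightarrow> card (rcosets\<^bsub>Ginf\<^esub> K)) (along I) \<and>
           ((\<lambda>i. d_p ((G i)\<lparr>carrier := \<pi> i0 i ` H'\<rparr>) p) \<longlongrightarrow> d_p (Ginf\<lparr>carrier := K\<rparr>) p) (along I)"
proof -
  note L = ginf(2)[unfolded is_direct_limit_def]
  have psihom: "\<forall>i\<in>I. \<psi> i \<in> hom (G i) Ginf" using L by (rule conjunct1)
  have compat: "\<forall>i\<in>I. \<forall>j\<in>I. i \<le> j \<longrightarrow> (\<forall>x\<in>carrier (G i). \<psi> j (\<pi> i j x) = \<psi> i x)"
    using L by (elim conjE)
  have carB: "carrier Ginf = (\<Union>i\<in>I. \<psi> i ` carrier (G i))" using L by (elim conjE)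
  have inj: "\<forall>i\<in>I. \<forall>j\<in>I. \<forall>x\<in>carrier (G i). \<forall>y\<in>carrier (G j).
        \<psi> i x = \<psi> j y \<longrightarrow> (\<exists>k\<in>I. i \<le> k \<and> j \<le> k \<and> \<pi> i k x = \<pi> j k y)"
    using L by (elim conjE)
  have grpi: "group (G i)" if "i \<in> I" for i using grp that by blast
  have gh: "group_hom (G i) (G j) (\<pi> i j)" if "i \<in> I" "j \<in> I" "i \<le> j" for i j
    using grpi hom that by (intro group_homI') auto
  have ghpsi: "group_hom (G i) Ginf (\<psi> i)" if "i \<in> I" for i
    using grpi psihom ginf(1) that by (intro group_homI') auto
  have compat': "\<psi> j (\<pi> i0 j x) = \<psi> i0 x" if "j \<in> I" "x \<in> carrier (G i0)" for j x
    using compat[rule_format, OF i0(1) that(1) _ that(2)] i0(2) that(1) by simp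
  have comp': "\<pi> j k (\<pi> i0 j x) = \<pi> i0 k x" if "j \<in> I" "k \<in> I" "j \<le> k" "x \<in> carrier (G i0)" for j k x
    using comp[rule_format, OF i0(1) that(1) that(2) _ that(3) that(4)] i0(2) that(1) by simp
  have surj0: "\<pi> i0 j ` carrier (G i0) = carrier (G j)" if "j \<in> I" for j
    using surj i0 that by blast
  have psi_img: "\<psi> j ` carrier (G j) = \<psi> i0 ` carrier (G i0)" if "j \<in> I" for j
  proof -
    have "\<psi> j ` (\<pi> i0 j ` carrier (G i0)) = \<psi> i0 ` carrier (G i0)"
      unfolding image_image using compat'[OF that] by (rule image_cong[OF refl])
    then show ?thesis using surj0[OF that] by simp
  qed
  have psi_surj: "\<psi> j ` carrier (G j) = carrier Ginf" if "j \<in> I" for j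
  proof -
    have "(\<Union>i\<in>I. \<psi> i ` carrier (G i)) = (\<Union>i\<in>I. \<psi> i0 ` carrier (G i0))"
      using psi_img by (rule SUP_cong[OF refl])
    also have "\<dots> = \<psi> i0 ` carrier (G i0)" using i0(1) by auto
    finally show ?thesis using carB psi_img[OF that] by simp
  qed
  interpret G0: group "G i0" using grpi[OF i0(1)] .
  interpret Gi: group Ginf by (rule ginf(1))
  interpret KN: normal K Ginf by (rule K(1))
  define H where "H = {g \<in> carrier (G i0). \<psi> i0 g \<in> K}"
  have Hi_eq: "\<pi> i0 i ` H = {x \<in> carrier (G i). \<psi> i x \<in> K}" if "i \<in> I" for i
  proof
    show "\<pi> i0 i ` H \<subseteq> {x \<in> carrier (G i). \<psi> i x \<in> K}"
    proof
      fix x assume "x \<in> \<pi> i0 i ` H"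
      then obtain g where g: "g \<in> carrier (G i0)" "\<psi> i0 g \<in> K" "x = \<pi> i0 i g" unfolding H_def by auto
      have "x \<in> carrier (G i)" using g(1,3) surj0[OF that] by auto
      moreover have "\<psi> i x = \<psi> i0 g" using compat'[OF that g(1)] g(3) by simp
      ultimately show "x \<in> {x \<in> carrier (G i). \<psi> i x \<in> K}" using g(2) by simp
    qed
    show "{x \<in> carrier (G i). \<psi> i x \<in> K} \<subseteq> \<pi> i0 i ` H"
    proof
      fix x assume x: "x \<in> {x \<in> carrier (G i). \<psi> i x \<in> K}"
      then have "x \<in> \<pi> i0 i ` carrier (G i0)" using surj0[OF that] by auto
      then obtain g where g: "g \<in> carrier (G i0)" "x = \<pi> i0 i g" by auto
      have "\<psi> i0 g = \<psi> i x" using compat'[OF that g(1)] g(2) by simp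
      then have "g \<in> H" unfolding H_def using g(1) x by simp
      then show "x \<in> \<pi> i0 i ` H" using g(2) by simp
    qed
  qed
  have H0: "\<pi> i0 i0 ` H = H"
  proof -
    have "\<pi> i0 i0 ` H = (\<lambda>x. x) ` H" using id i0(1) unfolding H_def by (intro image_cong) auto
    then show ?thesis by simp
  qed
  have Hnorm: "H \<lhd> G i0" unfolding H_def using preimage_quot(1)[OF ghpsi[OF i0(1)] psi_surj[OF i0(1)] K(1)] .
  have Hidx: "card (rcosets\<^bsub>G i0\<^esub> H) = card (rcosets\<^bsub>Ginf\<^esub> K)"
    unfolding H_def using preimage_index[OF ghpsi[OF i0(1)] psi_surj[OF i0(1)] K(1)] .
  have ppi: "p_power_index (G i0) H p" using K(2) Hidx unfolding p_power_index_def by simp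
  have KH: "K = \<psi> i0 ` H"
  proof
    show "\<psi> i0 ` H \<subseteq> K" unfolding H_def by auto
    show "K \<subseteq> \<psi> i0 ` H"
    proof
      fix k assume k: "k \<in> K"
      then have "k \<in> \<psi> i0 ` carrier (G i0)" using KN.subset psi_surj[OF i0(1)] by auto
      then obtain g where "g \<in> carrier (G i0)" "k = \<psi> i0 g" by auto
      then show "k \<in> \<psi> i0 ` H" unfolding H_def using k by auto
    qed
  qed
  have idx_i: "card (rcosets\<^bsub>G i\<^esub> (\<pi> i0 i ` H)) = card (rcosets\<^bsub>Ginf\<^esub> K)" if "i \<in> I" for i
    unfolding Hi_eq[OF that] using preimage_index[OF ghpsi[OF that] psi_surj[OF that] K(1)] .
  have Hi_sg: "subgroup (\<pi> i0 i ` H) (G i)" if "i \<in> I" for i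
    unfolding Hi_eq[OF that] using preimage_quot(1)[OF ghpsi[OF that] psi_surj[OF that] K(1)] normal_def by blast
  define A where "A i = (G i)\<lparr>carrier := \<pi> i0 i ` H\<rparr>" for i
  define B where "B = Ginf\<lparr>carrier := K\<rparr>"
  have Hi_c: "\<pi> i0 i ` H \<subseteq> carrier (G i)" if "i \<in> I" for i using Hi_sg[OF that] subgroup.subset by blast
    have lim: "is_direct_limit I A \<pi> B \<psi>"
    unfolding is_direct_limit_def
  proof (intro conjI ballI impI)
    fix i assume i: "i \<in> I"
    show "\<psi> i \<in> hom (A i) B"
    proof (rule homI)
      fix x assume "x \<in> carrier (A i)"
      then show "\<psi> i x \<in> carrier B" unfolding A_def B_def using Hi_eq[OF i] by auto
    next
      fix x y assume "x \<in> carrier (A i)" "y \<in> carrier (A i)"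
      then have "x \<in> carrier (G i)" "y \<in> carrier (G i)" unfolding A_def using Hi_c[OF i] by auto
      then show "\<psi> i (x \<otimes>\<^bsub>A i\<^esub> y) = \<psi> i x \<otimes>\<^bsub>B\<^esub> \<psi> i y"
        unfolding A_def B_def using group_hom.hom_mult[OF ghpsi[OF i]] by simp
    qed
  next
    fix i j x assume ij: "i \<in> I" "j \<in> I" "i \<le> j" and x: "x \<in> carrier (A i)"
    have "x \<in> carrier (G i)" using x Hi_c[OF ij(1)] unfolding A_def by auto
    then show "\<psi> j (\<pi> i j x) = \<psi> i x" using compat[rule_format, OF ij] by blast
  next
    show "carrier B = (\<Union>i\<in>I. \<psi> i ` carrier (A i))"
    proof
      show "carrier B \<subseteq> (\<Union>i\<in>I. \<psi> i ` carrier (A i))"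
        unfolding B_def A_def using KH H0 i0(1) by auto
      show "(\<Union>i\<in>I. \<psi> i ` carrier (A i)) \<subseteq> carrier B"
        unfolding B_def A_def using Hi_eq by auto
    qed
  next
    fix i j x y assume a: "i \<in> I" "j \<in> I" "x \<in> carrier (A i)" "y \<in> carrier (A j)" "\<psi> i x = \<psi> j y"
    have "x \<in> carrier (G i)" "y \<in> carrier (G j)" using a Hi_c unfolding A_def by auto
    then show "\<exists>k\<in>I. i \<le> k \<and> j \<le> k \<and> \<pi> i k x = \<pi> j k y"
      using inj[rule_format, OF a(1,2)] a(5) by blast
  qed
  have pos: "p > 0" using p by (simp add: prime_gt_0_nat)
  have finH: "finite (rcosets\<^bsub>G i0\<^esub> H)"
    using ppi pos unfolding p_power_index_def by (metis card_eq_0_iff not_gr0 power_not_zero)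
  have dp: "\<exists>i1\<in>I. \<forall>j\<in>I. i1 \<le> j \<longrightarrow> d_p (A j) p = d_p B p"
  proof (rule dp_eventually[OF i0 _ _ _ _ _ _ lim pos])
    show "\<forall>i\<in>I. group (A i)" unfolding A_def using Hi_sg grpi group.subgroup_imp_group by blast
    show "fin_gen (A i0)" unfolding A_def H0
      using G0.schreier_fin_gen[OF _ _ finH] grp i0(1) Hnorm normal_def by blast
    show "\<forall>i\<in>I. \<forall>j\<in>I. i \<le> j \<longrightarrow> \<pi> i j \<in> hom (A i) (A j)"
    proof (intro ballI impI)
      fix i j assume ij: "i \<in> I" "j \<in> I" "i \<le> j"
      show "\<pi> i j \<in> hom (A i) (A j)"
      proof (rule homI)
        fix x assume "x \<in> carrier (A i)"
        then obtain g where g: "g \<in> H" "x = \<pi> i0 i g" unfolding A_def by auto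
        have "g \<in> carrier (G i0)" using g(1) unfolding H_def by auto
        then have "\<pi> i j x = \<pi> i0 j g" using comp'[OF ij] g(2) by simp
        then show "\<pi> i j x \<in> carrier (A j)" unfolding A_def using g(1) by simp
      next
        fix x y assume "x \<in> carrier (A i)" "y \<in> carrier (A i)"
        then have "x \<in> carrier (G i)" "y \<in> carrier (G i)" unfolding A_def using Hi_c[OF ij(1)] by auto
        then show "\<pi> i j (x \<otimes>\<^bsub>A i\<^esub> y) = \<pi> i j x \<otimes>\<^bsub>A j\<^esub> \<pi> i j y"
          unfolding A_def using group_hom.hom_mult[OF gh[OF ij]] by simp
      qed
    qed
    show "\<forall>i\<in>I. \<forall>j\<in>I. i \<le> j \<longrightarrow> \<pi> i j ` carrier (A i) = carrier (A j)"
    proof (intro ballI impI)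
      fix i j assume ij: "i \<in> I" "j \<in> I" "i \<le> j"
      have "\<pi> i j ` (\<pi> i0 i ` H) = \<pi> i0 j ` H"
        unfolding image_image using comp'[OF ij] unfolding H_def by (intro image_cong) auto
      then show "\<pi> i j ` carrier (A i) = carrier (A j)" unfolding A_def by simp
    qed
    show "\<forall>i\<in>I. \<forall>j\<in>I. \<forall>k\<in>I. i \<le> j \<longrightarrow> j \<le> k \<longrightarrow> (\<forall>x\<in>carrier (A i). \<pi> j k (\<pi> i j x) = \<pi> i k x)"
    proof (intro ballI impI)
      fix i j k x assume a: "i \<in> I" "j \<in> I" "k \<in> I" "i \<le> j" "j \<le> k" "x \<in> carrier (A i)"
      have "x \<in> carrier (G i)" using a Hi_c unfolding A_def by auto
      then show "\<pi> j k (\<pi> i j x) = \<pi> i k x" using comp[rule_format, OF a(1-5)] by blast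
    qed
    show "group B" unfolding B_def using Gi.subgroup_imp_group[OF KN.subgroup_axioms] .
  qed
  show ?thesis
  proof (intro exI conjI)
    show "H \<lhd> G i0" by fact
    show "p_power_index (G i0) H p" by fact
    show "K = \<psi> i0 ` H" by fact
    show "is_direct_limit I (\<lambda>i. (G i)\<lparr>carrier := \<pi> i0 i ` H\<rparr>) \<pi> (Ginf\<lparr>carrier := K\<rparr>) \<psi>"
      using lim unfolding A_def B_def .
    show "((\<lambda>i. card (rcosets\<^bsub>G i\<^esub> (\<pi> i0 i ` H))) \<longlongrightarrow> card (rcosets\<^bsub>Ginf\<^esub> K)) (along I)"
      by (rule tendsto_eventually, rule along_eventually[OF i0(1)]) (use idx_i in blast)
    obtain i1 where i1: "i1 \<in> I" "\<forall>j\<in>I. i1 \<le> j \<longrightarrow> d_p (A j) p = d_p B p" using dp by blast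
    show "((\<lambda>i. d_p ((G i)\<lparr>carrier := \<pi> i0 i ` H\<rparr>) p) \<longlongrightarrow> d_p (Ginf\<lparr>carrier := K\<rparr>) p) (along I)"
      by (rule tendsto_eventually, rule along_eventually[OF i1(1)]) (use i1(2) in \<open>simp add: A_def B_def\<close>)
  qed
qed

end
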